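(* Let $F\colon\mathsf{Ring}\to\mathsf{Set}$ be a contravariant functor whose restriction to the full subcategory $\mathsf{CommRing}$ of commutative rings is isomorphic to $\operatorname{Spec}$. If $R$ is any ring admitting a ring homomorphism $\mathbb{C}\to R$, then $F(\mathrm{M}_n(R))=\varnothing$ for every $n\geq 3$.
   Context: Rings are unital and ring homomorphisms preserve the identity. $\operatorname{Spec}$ is the contravariant functor on commutative rings sending a ring to its set of prime ideals and a homomorphism $f$ to $P\mapsto f^{-1}(P)$. $\mathrm{M}_n(R)$ is the ring of $n\times n$ matrices over $R$. *)

theory Defs
  imports Complex_Main "HOL-Algebra.Algebra"
begin

definition complex_ring :: "complex ring" where
  "complex_ring = \<lparr> carrier = UNIV, monoid.mult = (*), monoid.one = 1,
                    ring.zero = 0, ring.add = (+) \<rparr>"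

definition mat_ring :: "nat \<Rightarrow> ('a, 'm) ring_scheme \<Rightarrow> (nat \<Rightarrow> nat \<Rightarrow> 'a) ring" where
  "mat_ring n R = \<lparr>
     carrier = {M. (\<forall>i j. i < n \<and> j < n \<longrightarrow> M i j \<in> carrier R) \<and>
                   (\<forall>i j. \<not> (i < n \<and> j < n) \<longrightarrow> M i j = \<zero>\<^bsub>R\<^esub>)},
     monoid.mult = (\<lambda>M N i j. if i < n \<and> j < n
                      then (\<Oplus>\<^bsub>R\<^esub> k\<in>{..<n}. M i k \<otimes>\<^bsub>R\<^esub> N k j) else \<zero>\<^bsub>R\<^esub>),
     monoid.one = (\<lambda>i j. if i < n \<and> j = i then \<one>\<^bsub>R\<^esub> else \<zero>\<^bsub>R\<^esub>),
     ring.zero = (\<lambda>i j. \<zero>\<^bsub>R\<^esub>),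
     ring.add = (\<lambda>M N i j. if i < n \<and> j < n then M i j \<oplus>\<^bsub>R\<^esub> N i j else \<zero>\<^bsub>R\<^esub>) \<rparr>"

definition Spec :: "('a, 'm) ring_scheme \<Rightarrow> 'a set set" where
  "Spec A = {P. primeideal P A}"

definition Spec_map :: "('a, 'm) ring_scheme \<Rightarrow> ('a \<Rightarrow> 'b) \<Rightarrow> 'b set \<Rightarrow> 'a set" where
  "Spec_map A f P = f -` P \<inter> carrier A"

text \<open>A contravariant functor from the category of (unital) rings whose
  carriers live in the universe type 'u to Set: object part F, morphism part
  Fm A B f : F B -> F A for f a ring homomorphism A -> B. Morphisms are
  functions on carriers, hence the extensionality condition.\<close>
definition contra_ring_functor ::
  "('u ring \<Rightarrow> 'x set) \<Rightarrow> ('u ring \<Rightarrow> 'u ring \<Rightarrow> ('u \<Rightarrow> 'u) \<Rightarrow> 'x \<Rightarrow> 'x) \<Rightarrow> bool" where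
  "contra_ring_functor F Fm \<longleftrightarrow>
     (\<forall>A B f. ring A \<and> ring B \<and> f \<in> ring_hom A B \<longrightarrow> Fm A B f \<in> F B \<rightarrow> F A) \<and>
     (\<forall>A B f g. ring A \<and> ring B \<and> f \<in> ring_hom A B \<and> (\<forall>x\<in>carrier A. f x = g x)
         \<longrightarrow> (\<forall>y\<in>F B. Fm A B f y = Fm A B g y)) \<and>
     (\<forall>A. ring A \<longrightarrow> (\<forall>y\<in>F A. Fm A A id y = y)) \<and>
     (\<forall>A B C f g. ring A \<and> ring B \<and> ring C \<and> f \<in> ring_hom A B \<and> g \<in> ring_hom B C
         \<longrightarrow> (\<forall>z\<in>F C. Fm A C (g \<circ> f) z = Fm A B f (Fm B C g z)))"

definition restricts_to_Spec ::
  "('u ring \<Rightarrow> 'x set) \<Rightarrow> ('u ring \<Rightarrow> 'u ring \<Rightarrow> ('u \<Rightarrow> 'u) \<Rightarrow> 'x \<Rightarrow> 'x) \<Rightarrow> bool" where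
  "restricts_to_Spec F Fm \<longleftrightarrow>
     (\<exists>\<eta>. (\<forall>A. cring A \<longrightarrow> bij_betw (\<eta> A) (F A) (Spec A)) \<and>
          (\<forall>A B f. cring A \<and> cring B \<and> f \<in> ring_hom A B
              \<longrightarrow> (\<forall>y\<in>F B. \<eta> A (Fm A B f y) = Spec_map A f (\<eta> B y))))"

end

theory Submission
  imports Defs
begin


lemma cx_simps[simp]: "carrier complex_ring = UNIV" "monoid.mult complex_ring = (*)"
  "monoid.one complex_ring = 1" "ring.zero complex_ring = 0" "ring.add complex_ring = (+)"
  by (simp_all add: complex_ring_def)

lemma cring_complex: "cring complex_ring"
proof (rule cringI)
  show "abelian_group complex_ring"
    by (rule abelian_groupI) (auto simp: algebra_simps intro: exI[of _ "- _"])
  show "comm_monoid complex_ring"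
    by (rule comm_monoidI) (auto simp: algebra_simps)
qed (auto simp: algebra_simps)

lemma ring_complex: "ring complex_ring"
  using cring_complex cring.axioms(1) by blast

lemma finsum_complex: "finsum complex_ring f A = sum f A"
proof -
  interpret abelian_monoid complex_ring using ring_complex by (simp add: ring.axioms(1) abelian_group.axioms(1))
  show ?thesis by (induct A rule: infinite_finite_induct) (auto simp: finsum_insert)
qed

lemma cring_of_comm:
  assumes "ring R" "\<And>x y. x \<in> carrier R \<Longrightarrow> y \<in> carrier R \<Longrightarrow> x \<otimes>\<^bsub>R\<^esub> y = y \<otimes>\<^bsub>R\<^esub> x"
  shows "cring R"
  using assms unfolding cring_def comm_monoid_def comm_monoid_axioms_def
  using ring.is_monoid by blast



definition cmul :: "nat \<Rightarrow> (nat \<Rightarrow> nat \<Rightarrow> complex) \<Rightarrow> (nat \<Rightarrow> nat \<Rightarrow> complex) \<Rightarrow> nat \<Rightarrow> nat \<Rightarrow> complex" where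
  "cmul n M N = (\<lambda>i j. if i < n \<and> j < n then (\<Sum>k<n. M i k * N k j) else 0)"
definition cadd :: "nat \<Rightarrow> (nat \<Rightarrow> nat \<Rightarrow> complex) \<Rightarrow> (nat \<Rightarrow> nat \<Rightarrow> complex) \<Rightarrow> nat \<Rightarrow> nat \<Rightarrow> complex" where
  "cadd n M N = (\<lambda>i j. if i < n \<and> j < n then M i j + N i j else 0)"
definition cid :: "nat \<Rightarrow> nat \<Rightarrow> nat \<Rightarrow> complex" where
  "cid n = (\<lambda>i j. if i < n \<and> j = i then 1 else 0)"
definition mapm :: "(complex \<Rightarrow> 'a) \<Rightarrow> nat \<Rightarrow> ('a,'m) ring_scheme \<Rightarrow> (nat \<Rightarrow> nat \<Rightarrow> complex) \<Rightarrow> nat \<Rightarrow> nat \<Rightarrow> 'a" where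
  "mapm \<phi> n R M = (\<lambda>i j. if i < n \<and> j < n then \<phi> (M i j) else \<zero>\<^bsub>R\<^esub>)"

lemma mat_ring_simps:
  "carrier (mat_ring n R) = {M. (\<forall>i j. i < n \<and> j < n \<longrightarrow> M i j \<in> carrier R) \<and>
                   (\<forall>i j. \<not> (i < n \<and> j < n) \<longrightarrow> M i j = \<zero>\<^bsub>R\<^esub>)}"
  "M \<otimes>\<^bsub>mat_ring n R\<^esub> N = (\<lambda>i j. if i < n \<and> j < n
                      then (\<Oplus>\<^bsub>R\<^esub> k\<in>{..<n}. M i k \<otimes>\<^bsub>R\<^esub> N k j) else \<zero>\<^bsub>R\<^esub>)"
  "\<one>\<^bsub>mat_ring n R\<^esub> = (\<lambda>i j. if i < n \<and> j = i then \<one>\<^bsub>R\<^esub> else \<zero>\<^bsub>R\<^esub>)"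
  "M \<oplus>\<^bsub>mat_ring n R\<^esub> N = (\<lambda>i j. if i < n \<and> j < n then M i j \<oplus>\<^bsub>R\<^esub> N i j else \<zero>\<^bsub>R\<^esub>)"
  by (simp_all add: mat_ring_def)

context
  fixes R :: "('a,'m) ring_scheme" and \<phi>
  assumes rR: "ring R" and hphi: "\<phi> \<in> ring_hom complex_ring R"
begin

interpretation RR: ring R by (rule rR)

interpretation H: ring_hom_ring complex_ring R \<phi>
  by (rule ring_hom_ringI2[OF ring_complex rR hphi])

lemma mapm_carrier: "mapm \<phi> n R M \<in> carrier (mat_ring n R)"
  unfolding mat_ring_simps mapm_def using ring_hom_closed[OF hphi] by auto

lemma mapm_add: "mapm \<phi> n R (cadd n M N) = mapm \<phi> n R M \<oplus>\<^bsub>mat_ring n R\<^esub> mapm \<phi> n R N"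
  unfolding mat_ring_simps mapm_def cadd_def
  by (rule ext)+ (auto simp: ring_hom_add[OF hphi, simplified])

lemma mapm_one: "mapm \<phi> n R (cid n) = \<one>\<^bsub>mat_ring n R\<^esub>"
proof -
  have "\<phi> 0 = \<zero>\<^bsub>R\<^esub>" using H.hom_zero by simp
  then show ?thesis unfolding mat_ring_simps mapm_def cid_def
    by (intro ext) (auto simp: ring_hom_one[OF hphi, simplified])
qed

lemma mapm_mul: "mapm \<phi> n R (cmul n M N) = mapm \<phi> n R M \<otimes>\<^bsub>mat_ring n R\<^esub> mapm \<phi> n R N"
proof (intro ext)
  fix i j
  show "mapm \<phi> n R (cmul n M N) i j = (mapm \<phi> n R M \<otimes>\<^bsub>mat_ring n R\<^esub> mapm \<phi> n R N) i j"
  proof (cases "i < n \<and> j < n")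
    case True
    have "\<phi> (\<Sum>k<n. M i k * N k j) = \<phi> (finsum complex_ring (\<lambda>k. M i k * N k j) {..<n})"
      by (simp add: finsum_complex)
    also have "\<dots> = finsum R (\<phi> \<circ> (\<lambda>k. M i k * N k j)) {..<n}"
      by (rule H.hom_finsum) simp
    also have "\<dots> = (\<Oplus>\<^bsub>R\<^esub> k\<in>{..<n}. mapm \<phi> n R M i k \<otimes>\<^bsub>R\<^esub> mapm \<phi> n R N k j)"
      using True ring_hom_closed[OF hphi]
      by (intro RR.finsum_cong') (auto simp: mapm_def ring_hom_mult[OF hphi, simplified])
    finally show ?thesis using True unfolding mat_ring_simps by (simp add: mapm_def cmul_def)
  next
    case False
    then have "\<not> (i < n \<and> j < n)" .
    then show ?thesis unfolding mat_ring_simps mapm_def by (simp only: if_False)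
  qed
qed

end


type_synonym vec3 = "int \<times> int \<times> int"

definition co :: "vec3 \<Rightarrow> nat \<Rightarrow> complex" where
  "co v p = of_int (if p = 0 then fst v else if p = 1 then fst (snd v) else snd (snd v))"
definition idx :: "nat \<Rightarrow> nat \<Rightarrow> nat \<Rightarrow> nat \<Rightarrow> nat" where
  "idx a b c i = (if i = a then 0 else if i = b then 1 else 2)"
definition cv :: "vec3 \<Rightarrow> nat \<Rightarrow> nat \<Rightarrow> nat \<Rightarrow> nat \<Rightarrow> complex" where
  "cv v a b c i = (if i \<in> {a,b,c} then co v (idx a b c i) else 0)"
definition nv :: "vec3 \<Rightarrow> complex" where
  "nv v = co v 0 * co v 0 + co v 1 * co v 1 + co v 2 * co v 2"
definition dotv :: "vec3 \<Rightarrow> vec3 \<Rightarrow> int" where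
  "dotv u v = fst u * fst v + fst (snd u) * fst (snd v) + snd (snd u) * snd (snd v)"
definition proj :: "vec3 \<Rightarrow> nat \<Rightarrow> nat \<Rightarrow> nat \<Rightarrow> nat \<Rightarrow> nat \<Rightarrow> complex" where
  "proj v a b c = (\<lambda>i j. cv v a b c i * cv v a b c j / nv v)"
definition Qc :: "nat \<Rightarrow> nat \<Rightarrow> nat \<Rightarrow> nat \<Rightarrow> nat \<Rightarrow> nat \<Rightarrow> complex" where
  "Qc n a b c = (\<lambda>i j. if i < n \<and> j = i \<and> i \<notin> {a,b,c} then 1 else 0)"
definition Ed :: "nat \<Rightarrow> nat \<Rightarrow> nat \<Rightarrow> complex" where
  "Ed k = (\<lambda>i j. if i = k \<and> j = k then 1 else 0)"
definition Qm :: "nat \<Rightarrow> nat \<Rightarrow> nat \<Rightarrow> complex" where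
  "Qm m = (\<lambda>i j. if i = j \<and> i < m then 1 else 0)"
definition frame_ok :: "vec3 \<Rightarrow> vec3 \<Rightarrow> vec3 \<Rightarrow> bool" where
  "frame_ok u v w \<longleftrightarrow> (\<forall>p\<in>{0,1,2::nat}. \<forall>q\<in>{0,1,2::nat}.
     co u p * co u q / nv u + co v p * co v q / nv v + co w p * co w q / nv w = (if p = q then 1 else 0))"

definition czero :: "nat \<Rightarrow> nat \<Rightarrow> complex" where "czero = (\<lambda>i j. 0)"

context
  fixes n a b c :: nat
  assumes abc: "a < n" "b < n" "c < n" "a \<noteq> b" "a \<noteq> c" "b \<noteq> c"
begin

lemma sum_cv: "(\<Sum>k<n. cv u a b c k * cv v a b c k) = of_int (dotv u v)"
proof -
  have "(\<Sum>k<n. cv u a b c k * cv v a b c k) = (\<Sum>k\<in>{a,b,c}. cv u a b c k * cv v a b c k)"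
    using abc by (intro sum.mono_neutral_right) (auto simp: cv_def)
  also have "\<dots> = of_int (dotv u v)"
    using abc by (simp add: cv_def idx_def co_def dotv_def)
  finally show ?thesis .
qed

lemma proj_orth: "dotv u v = 0 \<Longrightarrow> cmul n (proj u a b c) (proj v a b c) = czero"
proof (intro ext)
  fix i j assume d: "dotv u v = 0"
  have "(\<Sum>k<n. proj u a b c i k * proj v a b c k j) =
        (cv u a b c i * cv v a b c j / (nv u * nv v)) * (\<Sum>k<n. cv u a b c k * cv v a b c k)"
    unfolding proj_def sum_distrib_left by (intro sum.cong) (auto simp: field_simps)
  also have "\<dots> = 0" using d by (simp add: sum_cv)
  finally show "cmul n (proj u a b c) (proj v a b c) i j = czero i j"
    by (simp add: cmul_def czero_def)
qed

lemma proj_Q: "cmul n (proj u a b c) (Qc n a b c) = czero"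
  unfolding cmul_def czero_def by (intro ext) (auto simp: proj_def Qc_def cv_def intro!: sum.neutral)

lemma Q_proj: "cmul n (Qc n a b c) (proj u a b c) = czero"
  unfolding cmul_def czero_def by (intro ext) (auto simp: proj_def Qc_def cv_def intro!: sum.neutral)

lemma Q_Ed: "k \<in> {a,b,c} \<Longrightarrow> cmul n (Qc n a b c) (Ed k) = czero"
  unfolding cmul_def czero_def by (intro ext) (auto simp: Ed_def Qc_def intro!: sum.neutral)

lemma Ed_Q: "k \<in> {a,b,c} \<Longrightarrow> cmul n (Ed k) (Qc n a b c) = czero"
  unfolding cmul_def czero_def by (intro ext) (auto simp: Ed_def Qc_def intro!: sum.neutral)

lemma frame_sum:
  assumes f: "frame_ok u v w"
  shows "cadd n (cadd n (cadd n (proj u a b c) (proj v a b c)) (proj w a b c)) (Qc n a b c) = cid n"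
proof (intro ext)
  fix i j
  have f': "\<And>p q. p \<in> {0,1,2} \<Longrightarrow> q \<in> {0,1,2} \<Longrightarrow>
     co u p * co u q / nv u + co v p * co v q / nv v + co w p * co w q / nv w = (if p = q then 1 else 0)"
    using f unfolding frame_ok_def by blast
  show "cadd n (cadd n (cadd n (proj u a b c) (proj v a b c)) (proj w a b c)) (Qc n a b c) i j = cid n i j"
  proof (cases "i \<in> {a,b,c} \<and> j \<in> {a,b,c}")
    case True
    have ij: "idx a b c i \<in> {0,1,2}" "idx a b c j \<in> {0,1,2}" by (auto simp: idx_def)
    have e: "(idx a b c i = idx a b c j) = (i = j)" using True abc by (auto simp: idx_def)
    have "proj u a b c i j + proj v a b c i j + proj w a b c i j = (if i = j then 1 else 0)"
      using f'[OF ij] True unfolding proj_def cv_def e by simp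
    then show ?thesis using True abc by (auto simp: cadd_def Qc_def cid_def)
  next
    case False
    then have "proj u a b c i j = 0 \<and> proj v a b c i j = 0 \<and> proj w a b c i j = 0"
      by (auto simp: proj_def cv_def)
    then show ?thesis using False abc by (auto simp: cadd_def Qc_def cid_def)
  qed
qed

end

lemma Qm_step: "m < n \<Longrightarrow> cadd n (Qm m) (Ed m) = Qm (Suc m)"
  unfolding cadd_def Qm_def Ed_def by (intro ext) auto

lemma Qm_Ed: "cmul n (Qm m) (Ed m) = czero"
  unfolding cmul_def czero_def by (intro ext) (auto simp: Ed_def Qm_def intro!: sum.neutral)

lemma Ed_Qm: "cmul n (Ed m) (Qm m) = czero"
  unfolding cmul_def czero_def by (intro ext) (auto simp: Ed_def Qm_def intro!: sum.neutral)

lemma Qm_0: "Qm 0 = czero" unfolding Qm_def czero_def by auto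

lemma Qm_n: "Qm n = cid n" unfolding Qm_def cid_def by (intro ext) auto

lemma czero_add: "cadd n czero czero = czero" unfolding cadd_def czero_def by (intro ext) auto



lemma sub_ring_hom:
  assumes "ring A" "subring S A"
  shows "id \<in> ring_hom (A\<lparr>carrier := S\<rparr>) A"
  using assms subringE(1)[OF assms(2)] by (auto intro!: ring_hom_memI)

lemma sub_sub_ring_hom:
  assumes "T \<subseteq> S"
  shows "id \<in> ring_hom (A\<lparr>carrier := T\<rparr>) (A\<lparr>carrier := S\<rparr>)"
  using assms by (auto intro!: ring_hom_memI)

definition centr :: "('a,'m) ring_scheme \<Rightarrow> 'a \<Rightarrow> 'a set" where
  "centr A c = {a \<in> carrier A. a \<otimes>\<^bsub>A\<^esub> c = c \<otimes>\<^bsub>A\<^esub> a}"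

lemma (in ring) centr_subring:
  assumes "c \<in> carrier R"
  shows "subring (centr R c) R"
proof (rule subringI)
  show "centr R c \<subseteq> carrier R" by (auto simp: centr_def)
  show "\<one> \<in> centr R c" using assms by (auto simp: centr_def)
  fix h h1 h2 assume h: "h \<in> centr R c" and h1: "h1 \<in> centr R c" and h2: "h2 \<in> centr R c"
  show "\<ominus> h \<in> centr R c" using h assms by (auto simp: centr_def l_minus r_minus)
  show "h1 \<otimes> h2 \<in> centr R c" using h1 h2 assms
    by (auto simp: centr_def m_assoc) (metis m_assoc)
  show "h1 \<oplus> h2 \<in> centr R c" using h1 h2 assms by (auto simp: centr_def l_distr r_distr)
qed

lemma (in ring) generate_comm:
  assumes H: "H \<subseteq> carrier R" and comm: "\<And>a b. a \<in> H \<Longrightarrow> b \<in> H \<Longrightarrow> a \<otimes> b = b \<otimes> a"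
    and a: "a \<in> generate_ring R H" and b: "b \<in> generate_ring R H"
  shows "a \<otimes> b = b \<otimes> a"
proof -
  have 1: "generate_ring R H \<subseteq> centr R c" if "c \<in> H" for c
    using that H comm by (intro generate_ring_min_subring1 centr_subring) (auto simp: centr_def)
  have "H \<subseteq> centr R a"
  proof
    fix c assume c: "c \<in> H"
    then have "a \<in> centr R c" using 1 a by blast
    then show "c \<in> centr R a" using c H by (auto simp: centr_def)
  qed
  then have "generate_ring R H \<subseteq> centr R a"
    using a H generate_ring_in_carrier by (intro generate_ring_min_subring1 centr_subring) auto
  then show ?thesis using b by (auto simp: centr_def)
qed

locale spec_setting =
  fixes F :: "'u ring \<Rightarrow> 'x set"
    and Fm :: "'u ring \<Rightarrow> 'u ring \<Rightarrow> ('u \<Rightarrow> 'u) \<Rightarrow> 'x \<Rightarrow> 'x"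
    and \<eta> and A :: "'u ring" and x
  assumes func: "contra_ring_functor F Fm"
    and eta_bij: "\<And>B. cring B \<Longrightarrow> bij_betw (\<eta> B) (F B) (Spec B)"
    and eta_nat: "\<And>B C f. cring B \<Longrightarrow> cring C \<Longrightarrow> f \<in> ring_hom B C
              \<Longrightarrow> (\<forall>y\<in>F C. \<eta> B (Fm B C f y) = Spec_map B f (\<eta> C y))"
    and ringA: "ring A"
    and xF: "x \<in> F A"
begin

interpretation R: ring A by (rule ringA)

definition G where "G H = generate_ring A H"
definition pr where "pr S = \<eta> (A\<lparr>carrier := S\<rparr>) (Fm (A\<lparr>carrier := S\<rparr>) A id x)"
definition comm where "comm H \<longleftrightarrow> H \<subseteq> carrier A \<and> (\<forall>a\<in>H. \<forall>b\<in>H. a \<otimes>\<^bsub>A\<^esub> b = b \<otimes>\<^bsub>A\<^esub> a)"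
definition In where "In e \<longleftrightarrow> e \<in> pr (G {e})"

lemma G_subring: "H \<subseteq> carrier A \<Longrightarrow> subring (G H) A"
  unfolding G_def by (rule R.generate_ring_is_subring)

lemma G_ring: "H \<subseteq> carrier A \<Longrightarrow> ring (A\<lparr>carrier := G H\<rparr>)"
  unfolding G_def by (rule R.generate_ring_is_ring)

lemma G_cring: "comm H \<Longrightarrow> cring (A\<lparr>carrier := G H\<rparr>)"
proof -
  assume c: "comm H"
  then have H: "H \<subseteq> carrier A" and cm: "\<And>a b. a \<in> H \<Longrightarrow> b \<in> H \<Longrightarrow> a \<otimes>\<^bsub>A\<^esub> b = b \<otimes>\<^bsub>A\<^esub> a"
    unfolding comm_def by auto
  show ?thesis
  proof (rule cring_of_comm)
    show "ring (A\<lparr>carrier := G H\<rparr>)" using G_ring[OF H] .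
    fix a b assume "a \<in> carrier (A\<lparr>carrier := G H\<rparr>)" "b \<in> carrier (A\<lparr>carrier := G H\<rparr>)"
    then have "a \<in> generate_ring A H" "b \<in> generate_ring A H" unfolding G_def by simp_all
    then have "a \<otimes>\<^bsub>A\<^esub> b = b \<otimes>\<^bsub>A\<^esub> a" using R.generate_comm[OF H cm] by blast
    then show "a \<otimes>\<^bsub>A\<lparr>carrier := G H\<rparr>\<^esub> b = b \<otimes>\<^bsub>A\<lparr>carrier := G H\<rparr>\<^esub> a" by simp
  qed
qed

lemma Fm_Pi: "ring B \<Longrightarrow> ring C \<Longrightarrow> f \<in> ring_hom B C \<Longrightarrow> Fm B C f \<in> F C \<rightarrow> F B"
  using func unfolding contra_ring_functor_def by blast

lemma Fm_comp: "ring B \<Longrightarrow> ring C \<Longrightarrow> ring D \<Longrightarrow> f \<in> ring_hom B C \<Longrightarrow> g \<in> ring_hom C D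
   \<Longrightarrow> z \<in> F D \<Longrightarrow> Fm B D (g \<circ> f) z = Fm B C f (Fm C D g z)"
  using func unfolding contra_ring_functor_def by blast

lemma FmA: "comm H \<Longrightarrow> Fm (A\<lparr>carrier := G H\<rparr>) A id x \<in> F (A\<lparr>carrier := G H\<rparr>)"
proof -
  assume c: "comm H"
  then have H: "H \<subseteq> carrier A" unfolding comm_def by auto
  have "Fm (A\<lparr>carrier := G H\<rparr>) A id \<in> F A \<rightarrow> F (A\<lparr>carrier := G H\<rparr>)"
    by (rule Fm_Pi[OF G_ring[OF H] ringA sub_ring_hom[OF ringA G_subring[OF H]]])
  then show ?thesis using xF by blast
qed

lemma pr_primeG: "comm H \<Longrightarrow> primeideal (pr (G H)) (A\<lparr>carrier := G H\<rparr>)"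
proof -
  assume c: "comm H"
  have "\<eta> (A\<lparr>carrier := G H\<rparr>) (Fm (A\<lparr>carrier := G H\<rparr>) A id x) \<in> Spec (A\<lparr>carrier := G H\<rparr>)"
    using FmA[OF c] eta_bij[OF G_cring[OF c]] unfolding bij_betw_def by blast
  then show ?thesis unfolding pr_def Spec_def by simp
qed

lemma comm_sub: "comm H \<Longrightarrow> H \<subseteq> carrier A"
  unfolding comm_def by simp

lemma G_carr: "H \<subseteq> carrier A \<Longrightarrow> G H \<subseteq> carrier A"
  unfolding G_def by (rule R.generate_ring_incl)

lemma pr_restrict:
  assumes cX: "comm H" and cY: "comm K" and sub: "G K \<subseteq> G H"
  shows "pr (G K) = pr (G H) \<inter> G K"
proof -
  let ?T = "A\<lparr>carrier := G K\<rparr>" and ?S = "A\<lparr>carrier := G H\<rparr>"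
  have rT: "ring ?T" by (rule G_ring[OF comm_sub[OF cY]])
  have rS: "ring ?S" by (rule G_ring[OF comm_sub[OF cX]])
  have h1: "id \<in> ring_hom ?T ?S" by (rule sub_sub_ring_hom[OF sub])
  have h2: "id \<in> ring_hom ?S A" by (rule sub_ring_hom[OF ringA G_subring[OF comm_sub[OF cX]]])
  have "Fm ?T A (id \<circ> id) x = Fm ?T ?S id (Fm ?S A id x)"
    by (rule Fm_comp[OF rT rS ringA h1 h2 xF])
  then have e: "Fm ?T A id x = Fm ?T ?S id (Fm ?S A id x)" by simp
  have "\<eta> ?T (Fm ?T ?S id (Fm ?S A id x)) = Spec_map ?T id (\<eta> ?S (Fm ?S A id x))"
    using eta_nat[OF G_cring[OF cY] G_cring[OF cX] h1] FmA[OF cX] by blast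
  then show ?thesis unfolding pr_def e Spec_map_def by auto
qed

lemma comm_single: "e \<in> carrier A \<Longrightarrow> comm {e}"
  unfolding comm_def by auto

lemma in_G: "H \<subseteq> carrier A \<Longrightarrow> e \<in> H \<Longrightarrow> e \<in> G H"
  unfolding G_def by (auto intro: generate_ring.incl)

lemma In_iff:
  assumes cX: "comm H" and e: "e \<in> G H"
  shows "e \<in> pr (G H) \<longleftrightarrow> In e"
proof -
  have eA: "e \<in> carrier A" using e G_carr[OF comm_sub[OF cX]] by blast
  have sub: "G {e} \<subseteq> G H"
    unfolding G_def
    by (rule R.generate_ring_min_subring1) (use eA e G_subring[OF comm_sub[OF cX]] in \<open>auto simp: G_def\<close>)
  show ?thesis using pr_restrict[OF cX comm_single[OF eA] sub] in_G[of "{e}" e] eA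
    unfolding In_def by auto
qed

lemma In_pair:
  assumes e: "e \<in> carrier A" and f: "f \<in> carrier A" and ef: "e \<otimes>\<^bsub>A\<^esub> f = \<zero>\<^bsub>A\<^esub>"
    and fe: "f \<otimes>\<^bsub>A\<^esub> e = \<zero>\<^bsub>A\<^esub>"
  shows "In e \<or> In f"
proof -
  have c: "comm {e,f}" using e f ef fe by (auto simp: comm_def)
  interpret P: primeideal "pr (G {e,f})" "A\<lparr>carrier := G {e,f}\<rparr>" using pr_primeG[OF c] .
  have eG: "e \<in> G {e,f}" and fG: "f \<in> G {e,f}" using e f in_G by auto
  have "\<zero>\<^bsub>A\<^esub> \<in> pr (G {e,f})" using additive_subgroup.zero_closed[OF ideal.axioms(1)[OF primeideal.axioms(1)[OF pr_primeG[OF c]]]] by simp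
  then have "e \<in> pr (G {e,f}) \<or> f \<in> pr (G {e,f})"
    using P.I_prime[of e f] eG fG ef by simp
  then show ?thesis using In_iff[OF c eG] In_iff[OF c fG] by blast
qed

lemma In_add:
  assumes e: "e \<in> carrier A" and f: "f \<in> carrier A" and ef: "e \<otimes>\<^bsub>A\<^esub> f = f \<otimes>\<^bsub>A\<^esub> e"
    and Ie: "In e" and If: "In f"
  shows "In (e \<oplus>\<^bsub>A\<^esub> f)"
proof -
  have c: "comm {e,f}" using e f ef by (auto simp: comm_def)
  interpret P: primeideal "pr (G {e,f})" "A\<lparr>carrier := G {e,f}\<rparr>" using pr_primeG[OF c] .
  have eG: "e \<in> G {e,f}" and fG: "f \<in> G {e,f}" using e f in_G by auto
  have efG: "e \<oplus>\<^bsub>A\<^esub> f \<in> G {e,f}" using eG fG unfolding G_def by (rule generate_ring.eng_add)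
  have "e \<in> pr (G {e,f})" "f \<in> pr (G {e,f})" using In_iff[OF c eG] In_iff[OF c fG] Ie If by auto
  then have "e \<oplus>\<^bsub>A\<^esub> f \<in> pr (G {e,f})" using additive_subgroup.a_closed[OF ideal.axioms(1)[OF primeideal.axioms(1)[OF pr_primeG[OF c]]], of e f] by simp
  then show ?thesis using In_iff[OF c efG] by blast
qed

lemma not_In_one: "\<not> In \<one>\<^bsub>A\<^esub>"
proof
  assume "In \<one>\<^bsub>A\<^esub>"
  have c: "comm {\<one>\<^bsub>A\<^esub>}" by (rule comm_single) simp
  interpret P: primeideal "pr (G {\<one>\<^bsub>A\<^esub>})" "A\<lparr>carrier := G {\<one>\<^bsub>A\<^esub>}\<rparr>" using pr_primeG[OF c] .
  have "\<one>\<^bsub>A\<^esub> \<in> pr (G {\<one>\<^bsub>A\<^esub>})" using \<open>In _\<close> In_def by simp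
  then have "pr (G {\<one>\<^bsub>A\<^esub>}) = G {\<one>\<^bsub>A\<^esub>}" using P.one_imp_carrier by simp
  then show False using P.I_notcarr by simp
qed

lemma In_zero: "In \<zero>\<^bsub>A\<^esub>"
proof -
  have c: "comm {\<zero>\<^bsub>A\<^esub>}" by (rule comm_single) simp
  interpret P: primeideal "pr (G {\<zero>\<^bsub>A\<^esub>})" "A\<lparr>carrier := G {\<zero>\<^bsub>A\<^esub>}\<rparr>" using pr_primeG[OF c] .
  show ?thesis unfolding In_def using additive_subgroup.zero_closed[OF ideal.axioms(1)[OF primeideal.axioms(1)[OF pr_primeG[OF c]]]] by simp
qed

lemma In_four:
  assumes c: "e1 \<in> carrier A" "e2 \<in> carrier A" "e3 \<in> carrier A" "e4 \<in> carrier A"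
    and z: "e1 \<otimes>\<^bsub>A\<^esub> e2 = \<zero>\<^bsub>A\<^esub>" "e2 \<otimes>\<^bsub>A\<^esub> e1 = \<zero>\<^bsub>A\<^esub>"
           "e1 \<otimes>\<^bsub>A\<^esub> e3 = \<zero>\<^bsub>A\<^esub>" "e3 \<otimes>\<^bsub>A\<^esub> e1 = \<zero>\<^bsub>A\<^esub>"
           "e1 \<otimes>\<^bsub>A\<^esub> e4 = \<zero>\<^bsub>A\<^esub>" "e4 \<otimes>\<^bsub>A\<^esub> e1 = \<zero>\<^bsub>A\<^esub>"
           "e2 \<otimes>\<^bsub>A\<^esub> e3 = \<zero>\<^bsub>A\<^esub>" "e3 \<otimes>\<^bsub>A\<^esub> e2 = \<zero>\<^bsub>A\<^esub>"
           "e2 \<otimes>\<^bsub>A\<^esub> e4 = \<zero>\<^bsub>A\<^esub>" "e4 \<otimes>\<^bsub>A\<^esub> e2 = \<zero>\<^bsub>A\<^esub>"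
           "e3 \<otimes>\<^bsub>A\<^esub> e4 = \<zero>\<^bsub>A\<^esub>" "e4 \<otimes>\<^bsub>A\<^esub> e3 = \<zero>\<^bsub>A\<^esub>"
    and s: "((e1 \<oplus>\<^bsub>A\<^esub> e2) \<oplus>\<^bsub>A\<^esub> e3) \<oplus>\<^bsub>A\<^esub> e4 = \<one>\<^bsub>A\<^esub>"
    and I4: "In e4"
  shows "\<not> In e1 \<or> \<not> In e2 \<or> \<not> In e3"
proof (rule ccontr)
  assume "\<not> ?thesis"
  then have I: "In e1" "In e2" "In e3" by auto
  have "In (e1 \<oplus>\<^bsub>A\<^esub> e2)" using In_add[OF c(1,2)] z I by simp
  moreover have "(e1 \<oplus>\<^bsub>A\<^esub> e2) \<otimes>\<^bsub>A\<^esub> e3 = e3 \<otimes>\<^bsub>A\<^esub> (e1 \<oplus>\<^bsub>A\<^esub> e2)"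
    using c z by (simp add: R.l_distr R.r_distr)
  ultimately have "In ((e1 \<oplus>\<^bsub>A\<^esub> e2) \<oplus>\<^bsub>A\<^esub> e3)" using In_add c I by simp
  moreover have "((e1 \<oplus>\<^bsub>A\<^esub> e2) \<oplus>\<^bsub>A\<^esub> e3) \<otimes>\<^bsub>A\<^esub> e4 = e4 \<otimes>\<^bsub>A\<^esub> ((e1 \<oplus>\<^bsub>A\<^esub> e2) \<oplus>\<^bsub>A\<^esub> e3)"
    using c z by (simp add: R.l_distr R.r_distr)
  ultimately have "In (((e1 \<oplus>\<^bsub>A\<^esub> e2) \<oplus>\<^bsub>A\<^esub> e3) \<oplus>\<^bsub>A\<^esub> e4)" using In_add c I4 by simp
  then show False using s not_In_one by simp
qed

end


lemma KS:
  fixes p :: "vec3 \<Rightarrow> bool"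
  assumes "p (0,0,1) \<or> p (0,1,0)"
    and "p (0,0,1) \<or> p (1,-1,0)"
    and "p (0,0,1) \<or> p (1,0,0)"
    and "p (0,0,1) \<or> p (1,1,0)"
    and "p (0,1,-1) \<or> p (0,1,1)"
    and "p (0,1,-1) \<or> p (1,-1,-1)"
    and "p (0,1,-1) \<or> p (1,0,0)"
    and "p (0,1,-1) \<or> p (1,1,1)"
    and "p (0,1,0) \<or> p (1,0,-1)"
    and "p (0,1,0) \<or> p (1,0,0)"
    and "p (0,1,0) \<or> p (1,0,1)"
    and "p (0,1,1) \<or> p (1,-1,1)"
    and "p (0,1,1) \<or> p (1,0,0)"
    and "p (0,1,1) \<or> p (1,1,-1)"
    and "p (1,-2,-1) \<or> p (2,1,0)"
    and "p (1,-2,0) \<or> p (2,1,-1)"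
    and "p (1,-2,0) \<or> p (2,1,1)"
    and "p (1,-2,1) \<or> p (2,1,0)"
    and "p (1,-1,-2) \<or> p (2,0,1)"
    and "p (1,-1,-1) \<or> p (1,0,1)"
    and "p (1,-1,-1) \<or> p (1,1,0)"
    and "p (1,-1,0) \<or> p (1,1,-1)"
    and "p (1,-1,0) \<or> p (1,1,1)"
    and "p (1,-1,1) \<or> p (1,0,-1)"
    and "p (1,-1,1) \<or> p (1,1,0)"
    and "p (1,-1,2) \<or> p (2,0,-1)"
    and "p (1,0,-2) \<or> p (2,-1,1)"
    and "p (1,0,-2) \<or> p (2,1,1)"
    and "p (1,0,-1) \<or> p (1,0,1)"
    and "p (1,0,-1) \<or> p (1,1,1)"
    and "p (1,0,1) \<or> p (1,1,-1)"
    and "p (1,0,2) \<or> p (2,-1,-1)"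
    and "p (1,0,2) \<or> p (2,1,-1)"
    and "p (1,1,-2) \<or> p (2,0,1)"
    and "p (1,1,2) \<or> p (2,0,-1)"
    and "p (1,2,-1) \<or> p (2,-1,0)"
    and "p (1,2,0) \<or> p (2,-1,-1)"
    and "p (1,2,0) \<or> p (2,-1,1)"
    and "p (1,2,1) \<or> p (2,-1,0)"
    and "\<not> p (0,0,1) \<or> \<not> p (0,1,0) \<or> \<not> p (1,0,0)"
    and "\<not> p (0,0,1) \<or> \<not> p (1,-2,0) \<or> \<not> p (2,1,0)"
    and "\<not> p (0,0,1) \<or> \<not> p (1,-1,0) \<or> \<not> p (1,1,0)"
    and "\<not> p (0,0,1) \<or> \<not> p (1,2,0) \<or> \<not> p (2,-1,0)"
    and "\<not> p (0,1,-1) \<or> \<not> p (0,1,1) \<or> \<not> p (1,0,0)"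
    and "\<not> p (0,1,-1) \<or> \<not> p (1,-1,-1) \<or> \<not> p (2,1,1)"
    and "\<not> p (0,1,-1) \<or> \<not> p (1,1,1) \<or> \<not> p (2,-1,-1)"
    and "\<not> p (0,1,0) \<or> \<not> p (1,0,-2) \<or> \<not> p (2,0,1)"
    and "\<not> p (0,1,0) \<or> \<not> p (1,0,-1) \<or> \<not> p (1,0,1)"
    and "\<not> p (0,1,0) \<or> \<not> p (1,0,2) \<or> \<not> p (2,0,-1)"
    and "\<not> p (0,1,1) \<or> \<not> p (1,-1,1) \<or> \<not> p (2,1,-1)"
    and "\<not> p (0,1,1) \<or> \<not> p (1,1,-1) \<or> \<not> p (2,-1,1)"
    and "\<not> p (1,-2,-1) \<or> \<not> p (1,0,1) \<or> \<not> p (1,1,-1)"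
    and "\<not> p (1,-2,1) \<or> \<not> p (1,0,-1) \<or> \<not> p (1,1,1)"
    and "\<not> p (1,-1,-2) \<or> \<not> p (1,-1,1) \<or> \<not> p (1,1,0)"
    and "\<not> p (1,-1,-1) \<or> \<not> p (1,-1,2) \<or> \<not> p (1,1,0)"
    and "\<not> p (1,-1,-1) \<or> \<not> p (1,0,1) \<or> \<not> p (1,2,-1)"
    and "\<not> p (1,-1,0) \<or> \<not> p (1,1,-2) \<or> \<not> p (1,1,1)"
    and "\<not> p (1,-1,0) \<or> \<not> p (1,1,-1) \<or> \<not> p (1,1,2)"
    and "\<not> p (1,-1,1) \<or> \<not> p (1,0,-1) \<or> \<not> p (1,2,1)"
  shows False
  using assms by sat

lemma dotv_comm: "dotv u v = dotv v u" unfolding dotv_def by (simp add: mult.commute)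

locale mat_setting = spec_setting F Fm \<eta> A x
  for F :: "'u ring \<Rightarrow> 'x set" and Fm and \<eta> and A and x +
  fixes R :: "'r ring" and \<phi> and g and n
  assumes rR: "ring R" and hphi: "\<phi> \<in> ring_hom complex_ring R" and hg: "g \<in> ring_hom (mat_ring n R) A"
begin

interpretation RA: ring A by (rule ringA)

definition psi where "psi M = g (mapm \<phi> n R M)"

lemma psi_carr: "psi M \<in> carrier A"
  unfolding psi_def by (rule ring_hom_closed[OF hg mapm_carrier[OF rR hphi]])

lemma psi_mul: "psi (cmul n M N) = psi M \<otimes>\<^bsub>A\<^esub> psi N"
  unfolding psi_def mapm_mul[OF rR hphi] by (rule ring_hom_mult[OF hg mapm_carrier[OF rR hphi] mapm_carrier[OF rR hphi]])

lemma psi_add: "psi (cadd n M N) = psi M \<oplus>\<^bsub>A\<^esub> psi N"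
  unfolding psi_def mapm_add[OF rR hphi] by (rule ring_hom_add[OF hg mapm_carrier[OF rR hphi] mapm_carrier[OF rR hphi]])

lemma psi_one: "psi (cid n) = \<one>\<^bsub>A\<^esub>"
  unfolding psi_def mapm_one[OF rR hphi] by (rule ring_hom_one[OF hg])

lemma psi_zero: "psi czero = \<zero>\<^bsub>A\<^esub>"
proof -
  have "psi czero \<oplus>\<^bsub>A\<^esub> psi czero = psi czero \<oplus>\<^bsub>A\<^esub> \<zero>\<^bsub>A\<^esub>"
    using psi_add[of czero czero] czero_add[of n] psi_carr by simp
  then show ?thesis using psi_carr RA.add.l_cancel by blast
qed

lemma exists_k: "\<exists>k<n. \<not> In (psi (Ed k))"
proof (rule ccontr)
  assume "\<not> ?thesis"
  then have all: "\<And>k. k < n \<Longrightarrow> In (psi (Ed k))" by blast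
  have "m \<le> n \<Longrightarrow> In (psi (Qm m))" for m
  proof (induction m)
    case 0 then show ?case using Qm_0 psi_zero In_zero by simp
  next
    case (Suc m)
    then have m: "m < n" by simp
    have c: "psi (Qm m) \<otimes>\<^bsub>A\<^esub> psi (Ed m) = psi (Ed m) \<otimes>\<^bsub>A\<^esub> psi (Qm m)"
      using psi_mul[symmetric] Qm_Ed Ed_Qm by metis
    have "In (psi (Qm m) \<oplus>\<^bsub>A\<^esub> psi (Ed m))"
      using In_add[OF psi_carr psi_carr c] Suc m all by simp
    then show ?case using psi_add[symmetric] Qm_step[OF m] by metis
  qed
  then have "In (psi (Qm n))" by simp
  then show False using Qm_n psi_one not_In_one by simp
qed

lemma contra:
  assumes abc: "a < n" "b < n" "c < n" "a \<noteq> b" "a \<noteq> c" "b \<noteq> c"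
    and k: "k \<in> {a,b,c}" and nk: "\<not> In (psi (Ed k))"
  shows False
proof -
  have "In (psi (Qc n a b c)) \<or> In (psi (Ed k))"
    by (rule In_pair[OF psi_carr psi_carr])
       (simp_all only: psi_mul[symmetric] Q_Ed[OF abc k] Ed_Q[OF abc k] psi_zero)
  then have IQ: "In (psi (Qc n a b c))" using nk by blast
  have Pair: "In (psi (proj u a b c)) \<or> In (psi (proj v a b c))" if d: "dotv u v = 0" for u v
    by (rule In_pair[OF psi_carr psi_carr])
       (simp_all only: psi_mul[symmetric] proj_orth[OF abc d] proj_orth[OF abc d[unfolded dotv_comm[of u]]] psi_zero)
  have Tri: "\<not> In (psi (proj u a b c)) \<or> \<not> In (psi (proj v a b c)) \<or> \<not> In (psi (proj w a b c))"
    if d1: "dotv u v = 0" and d2: "dotv u w = 0" and d3: "dotv v w = 0" and f: "frame_ok u v w" for u v w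
  proof (rule In_four[OF psi_carr psi_carr psi_carr psi_carr])
    show "In (psi (Qc n a b c))" by (rule IQ)
    show "((psi (proj u a b c) \<oplus>\<^bsub>A\<^esub> psi (proj v a b c)) \<oplus>\<^bsub>A\<^esub> psi (proj w a b c)) \<oplus>\<^bsub>A\<^esub> psi (Qc n a b c) = \<one>\<^bsub>A\<^esub>"
      by (simp only: psi_add[symmetric] frame_sum[OF abc f] psi_one)
  qed (simp_all only: psi_mul[symmetric] proj_orth[OF abc] d1 d2 d3 dotv_comm[of v u] dotv_comm[of w u] dotv_comm[of w v]
          proj_Q[OF abc] Q_proj[OF abc] psi_zero)
  show False
    apply (rule KS[of "\<lambda>v. In (psi (proj v a b c))"])
    apply (rule Pair Tri; simp add: dotv_def frame_ok_def co_def nv_def)+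
    done
qed

lemma no_point: "3 \<le> n \<Longrightarrow> False"
proof -
  assume n: "3 \<le> n"
  obtain k where k: "k < n" "\<not> In (psi (Ed k))" using exists_k by blast
  show False
  proof (cases "k < 3")
    case True
    then show False using contra[of 0 1 2 k] n k by force
  next
    case False
    then show False using contra[of 0 1 k k] n k by force
  qed
qed

end


theorem corollary4p1:
  fixes F :: "'u ring \<Rightarrow> 'x set"
    and Fm :: "'u ring \<Rightarrow> 'u ring \<Rightarrow> ('u \<Rightarrow> 'u) \<Rightarrow> 'x \<Rightarrow> 'x"
    and R :: "'r ring"
    and A :: "'u ring"
    and n :: nat
  assumes "contra_ring_functor F Fm"
    and "restricts_to_Spec F Fm"
    and "ring R"
    and "ring_hom complex_ring R \<noteq> {}"
    and "n \<ge> 3"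
    and "ring A"
    and "A \<simeq> mat_ring n R"
  shows "F A = {}"
proof (rule ccontr)
  assume "F A \<noteq> {}"
  then obtain x where xF: "x \<in> F A" by blast
  from assms(2) obtain \<eta> where eb: "\<And>B. cring B \<Longrightarrow> bij_betw (\<eta> B) (F B) (Spec B)"
    and en: "\<And>B C f. cring B \<Longrightarrow> cring C \<Longrightarrow> f \<in> ring_hom B C
              \<Longrightarrow> (\<forall>y\<in>F C. \<eta> B (Fm B C f y) = Spec_map B f (\<eta> C y))"
    unfolding restricts_to_Spec_def by blast
  from assms(4) obtain \<phi> where hphi: "\<phi> \<in> ring_hom complex_ring R" by blast
  have "mat_ring n R \<simeq> A" using ring_iso_sym[OF assms(6) assms(7)] .
  then obtain g where "g \<in> ring_iso (mat_ring n R) A" unfolding is_ring_iso_def by blast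
  then have hg: "g \<in> ring_hom (mat_ring n R) A" by (simp add: ring_iso_def)
  have S: "spec_setting F Fm \<eta> A x"
    unfolding spec_setting_def using assms(1) assms(6) xF eb en by blast
  have M: "mat_setting F Fm \<eta> A x R \<phi> g n"
    unfolding mat_setting_def mat_setting_axioms_def using S assms(3) hphi hg by blast
  interpret M: mat_setting F Fm \<eta> A x R \<phi> g n by (rule M)
  show False using M.no_point assms(5) .
qed

end
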